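(* Let $m,n\ge2$, let $\mathcal D$ be an $m\times n$ domino diagram, and consider the associated set of generalized domino states in $\mathbb C^m\otimes\mathbb C^n$ (with any choice of the nonzero constants $\alpha_r,\beta_c$). Suppose the graphs of these product states satisfy $G_A=\overline{G_B}$. If $\mathcal D$ contains a vertical domino of length at least $2$, then the states are not perfectly distinguishable by one-way LOCC with Alice measuring first; and if $\mathcal D$ contains a horizontal domino of length at least $2$, then they are not perfectly distinguishable by one-way LOCC with Bob measuring first.
   Context: An $m\times n$ chessboard has squares indexed by $\mathbb Z_m\times\mathbb Z_n$ and is regarded as a torus. A horizontal domino is a set of squares $(r,b+1),\dots,(r,b+s)$ (column indices mod $n$), a vertical domino is a set $(b+1,c),\dots,(b+s,c)$ (row indices mod $m$); $s$ is its length. An $m\times n$ domino diagram is a partition of the squares into dominoes. With $\{|0\rangle,\dots,|m-1\rangle\}$ and $\{|0\rangle,\dots,|n-1\rangle\}$ the standard bases of $\mathbb C^m$ (Alice) and $\mathbb C^n$ (Bob), fix a nonzero complex number $\alpha_r$ for each row $r$ and $\beta_c$ for each column $c$. The generalized domino states are obtained by assigning to each square a state: if square $(r,b+j)$, $1\le j\le s$, lies in a horizontal domino occupying $(r,b+1),\dots,(r,b+s)$, it is assigned $\sum_{k=1}^s\alpha_r^k\omega^{jk}|r\rangle\otimes|b+k\rangle$ with $\omega=e^{2\pi i/s}$; if square $(b+j,c)$ lies in a vertical domino occupying $(b+1,c),\dots,(b+s,c)$, it is assigned $\sum_{k=1}^s\beta_c^k\omega^{jk}|b+k\rangle\otimes|c\rangle$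 with $\omega=e^{2\pi i/s}$. For product states $|\psi_v^A\rangle\otimes|\psi_v^B\rangle$, $G_A$ is the graph on the index set with an edge $\{u,v\}$ ($u\ne v$) iff $\langle\psi_u^A|\psi_v^A\rangle\ne0$, $G_B$ likewise with Bob's vectors, and $\overline{G}$ is the complement. One-way LOCC with Alice first: there exist positive semidefinite $Q_1,\dots,Q_N$ on Alice's space with $\sum_jQ_j=I$ and, for each $j$, positive semidefinite $R^{(j)}_1,\dots$ on Bob's space summing to $I$ (one for each state) such that $\langle\psi_l|Q_j\otimes R^{(j)}_k|\psi_l\rangle=0$ for all $j$ and $k\ne l$; with Bob first, the same with the roles of the two factors exchanged. *)

theory Defs
  imports Complex_Main
begin

(* Dominoes on the m x n torus Z_m x Z_n (rows/columns represented by nats < m, < n).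
   Hor r b s : horizontal domino in row r occupying columns b+1,...,b+s (mod n)
   Ver c b s : vertical domino in column c occupying rows b+1,...,b+s (mod m) *)
datatype domino = Hor nat nat nat | Ver nat nat nat

definition board :: "nat \<Rightarrow> nat \<Rightarrow> (nat \<times> nat) set" where
  "board m n = {..<m} \<times> {..<n}"

fun dom_squares :: "nat \<Rightarrow> nat \<Rightarrow> domino \<Rightarrow> (nat \<times> nat) set" where
  "dom_squares m n (Hor r b s) = {(r, (b + j) mod n) | j. 1 \<le> j \<and> j \<le> s}"
| "dom_squares m n (Ver c b s) = {((b + j) mod m, c) | j. 1 \<le> j \<and> j \<le> s}"

fun valid_domino :: "nat \<Rightarrow> nat \<Rightarrow> domino \<Rightarrow> bool" where
  "valid_domino m n (Hor r b s) = (r < m \<and> b < n \<and> 1 \<le> s \<and> s \<le> n)"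
| "valid_domino m n (Ver c b s) = (c < n \<and> b < m \<and> 1 \<le> s \<and> s \<le> m)"

fun dom_len :: "domino \<Rightarrow> nat" where
  "dom_len (Hor r b s) = s"
| "dom_len (Ver c b s) = s"

fun is_horizontal :: "domino \<Rightarrow> bool" where
  "is_horizontal (Hor r b s) = True"
| "is_horizontal (Ver c b s) = False"

fun is_vertical :: "domino \<Rightarrow> bool" where
  "is_vertical (Hor r b s) = False"
| "is_vertical (Ver c b s) = True"

definition domino_diagram :: "nat \<Rightarrow> nat \<Rightarrow> domino set \<Rightarrow> bool" where
  "domino_diagram m n D \<longleftrightarrow>
     (\<forall>d\<in>D. valid_domino m n d) \<and>
     (\<forall>sq\<in>board m n. \<exists>!d. d \<in> D \<and> sq \<in> dom_squares m n d)"

definition dom_of :: "nat \<Rightarrow> nat \<Rightarrow> domino set \<Rightarrow> nat \<times> nat \<Rightarrow> domino" where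
  "dom_of m n D sq = (THE d. d \<in> D \<and> sq \<in> dom_squares m n d)"

fun dom_pos :: "nat \<Rightarrow> nat \<Rightarrow> domino \<Rightarrow> nat \<times> nat \<Rightarrow> nat" where
  "dom_pos m n (Hor r b s) sq = (THE j. 1 \<le> j \<and> j \<le> s \<and> (b + j) mod n = snd sq)"
| "dom_pos m n (Ver c b s) sq = (THE j. 1 \<le> j \<and> j \<le> s \<and> (b + j) mod m = fst sq)"

definition ket :: "nat \<Rightarrow> nat \<Rightarrow> complex" where
  "ket i = (\<lambda>p. if p = i then 1 else 0)"

definition root_unity :: "nat \<Rightarrow> complex" where
  "root_unity s = exp (2 * of_real pi * \<i> / of_nat s)"

definition alice_vec :: "nat \<Rightarrow> nat \<Rightarrow> domino set \<Rightarrow> (nat \<Rightarrow> complex) \<Rightarrow> (nat \<Rightarrow> complex)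
    \<Rightarrow> nat \<times> nat \<Rightarrow> nat \<Rightarrow> complex" where
  "alice_vec m n D \<alpha> \<beta> sq =
     (let d = dom_of m n D sq; j = dom_pos m n d sq in
      case d of
        Hor r b s \<Rightarrow> ket r
      | Ver c b s \<Rightarrow> (\<lambda>p. \<Sum>k\<in>{1..s}. if p = (b + k) mod m
                            then \<beta> c ^ k * root_unity s ^ (j * k) else 0))"

definition bob_vec :: "nat \<Rightarrow> nat \<Rightarrow> domino set \<Rightarrow> (nat \<Rightarrow> complex) \<Rightarrow> (nat \<Rightarrow> complex)
    \<Rightarrow> nat \<times> nat \<Rightarrow> nat \<Rightarrow> complex" where
  "bob_vec m n D \<alpha> \<beta> sq =
     (let d = dom_of m n D sq; j = dom_pos m n d sq in
      case d of
        Hor r b s \<Rightarrow> (\<lambda>p. \<Sum>k\<in>{1..s}. if p = (b + k) mod n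
                            then \<alpha> r ^ k * root_unity s ^ (j * k) else 0)
      | Ver c b s \<Rightarrow> ket c)"

definition prod_state :: "(nat \<Rightarrow> complex) \<Rightarrow> (nat \<Rightarrow> complex) \<Rightarrow> nat \<times> nat \<Rightarrow> complex" where
  "prod_state a b = (\<lambda>(i, i'). a i * b i')"

definition cinner :: "nat \<Rightarrow> (nat \<Rightarrow> complex) \<Rightarrow> (nat \<Rightarrow> complex) \<Rightarrow> complex" where
  "cinner d u v = (\<Sum>i<d. cnj (u i) * v i)"

definition psd :: "nat \<Rightarrow> (nat \<Rightarrow> nat \<Rightarrow> complex) \<Rightarrow> bool" where
  "psd d Q \<longleftrightarrow> (\<forall>v :: nat \<Rightarrow> complex.
      Im (\<Sum>i<d. \<Sum>j<d. cnj (v i) * Q i j * v j) = 0 \<and>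
      Re (\<Sum>i<d. \<Sum>j<d. cnj (v i) * Q i j * v j) \<ge> 0)"

definition is_identity :: "nat \<Rightarrow> (nat \<Rightarrow> nat \<Rightarrow> complex) \<Rightarrow> bool" where
  "is_identity d M \<longleftrightarrow> (\<forall>i<d. \<forall>j<d. M i j = (if i = j then 1 else 0))"

definition expect_tensor :: "nat \<Rightarrow> nat \<Rightarrow> (nat \<Rightarrow> nat \<Rightarrow> complex) \<Rightarrow> (nat \<Rightarrow> nat \<Rightarrow> complex)
    \<Rightarrow> (nat \<times> nat \<Rightarrow> complex) \<Rightarrow> complex" where
  "expect_tensor dA dB Q R \<psi> =
     (\<Sum>i<dA. \<Sum>i'<dB. \<Sum>p<dA. \<Sum>p'<dB.
        cnj (\<psi> (i, i')) * (Q i p * R i' p') * \<psi> (p, p'))"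

definition one_way_LOCC_Alice_first :: "nat \<Rightarrow> nat \<Rightarrow> 'i set \<Rightarrow> ('i \<Rightarrow> nat \<times> nat \<Rightarrow> complex) \<Rightarrow> bool" where
  "one_way_LOCC_Alice_first dA dB S \<psi> \<longleftrightarrow>
     (\<exists>(N::nat) (Q :: nat \<Rightarrow> nat \<Rightarrow> nat \<Rightarrow> complex) (R :: nat \<Rightarrow> 'i \<Rightarrow> nat \<Rightarrow> nat \<Rightarrow> complex).
        (\<forall>t<N. psd dA (Q t)) \<and>
        is_identity dA (\<lambda>i j. \<Sum>t<N. Q t i j) \<and>
        (\<forall>t<N. (\<forall>k\<in>S. psd dB (R t k)) \<and> is_identity dB (\<lambda>i j. \<Sum>k\<in>S. R t k i j)) \<and>
        (\<forall>t<N. \<forall>k\<in>S. \<forall>l\<in>S. k \<noteq> l \<longrightarrow> expect_tensor dA dB (Q t) (R t k) (\<psi> l) = 0))"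

definition one_way_LOCC_Bob_first :: "nat \<Rightarrow> nat \<Rightarrow> 'i set \<Rightarrow> ('i \<Rightarrow> nat \<times> nat \<Rightarrow> complex) \<Rightarrow> bool" where
  "one_way_LOCC_Bob_first dA dB S \<psi> \<longleftrightarrow>
     (\<exists>(N::nat) (Q :: nat \<Rightarrow> nat \<Rightarrow> nat \<Rightarrow> complex) (R :: nat \<Rightarrow> 'i \<Rightarrow> nat \<Rightarrow> nat \<Rightarrow> complex).
        (\<forall>t<N. psd dB (Q t)) \<and>
        is_identity dB (\<lambda>i j. \<Sum>t<N. Q t i j) \<and>
        (\<forall>t<N. (\<forall>k\<in>S. psd dA (R t k)) \<and> is_identity dA (\<lambda>i j. \<Sum>k\<in>S. R t k i j)) \<and>
        (\<forall>t<N. \<forall>k\<in>S. \<forall>l\<in>S. k \<noteq> l \<longrightarrow> expect_tensor dA dB (R t k) (Q t) (\<psi> l) = 0))"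

definition ortho_graph :: "nat \<Rightarrow> 'i set \<Rightarrow> ('i \<Rightarrow> nat \<Rightarrow> complex) \<Rightarrow> 'i set set" where
  "ortho_graph d S v = {{u, w} | u w. u \<in> S \<and> w \<in> S \<and> u \<noteq> w \<and> cinner d (v u) (v w) \<noteq> 0}"

definition complement_graph :: "'i set \<Rightarrow> 'i set set \<Rightarrow> 'i set set" where
  "complement_graph S E = {{u, w} | u w. u \<in> S \<and> w \<in> S \<and> u \<noteq> w} - E"

end

theory Submission imports Defs "HOL-Analysis.Analysis" begin


definition qf :: "nat \<Rightarrow> (nat \<Rightarrow> nat \<Rightarrow> complex) \<Rightarrow> (nat \<Rightarrow> complex) \<Rightarrow> complex" where
 "qf d M v = (\<Sum>i<d. \<Sum>j<d. cnj (v i) * M i j * v j)"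
definition bf :: "nat \<Rightarrow> (nat \<Rightarrow> nat \<Rightarrow> complex) \<Rightarrow> (nat \<Rightarrow> complex) \<Rightarrow> (nat \<Rightarrow> complex) \<Rightarrow> complex" where
 "bf d M w v = (\<Sum>i<d. \<Sum>j<d. cnj (w i) * M i j * v j)"

lemma qf_bf: "qf d M v = bf d M v v" by (simp add: qf_def bf_def)

lemma bf_expand: "bf d M (\<lambda>i. v i + z * w i) (\<lambda>i. v i + z * w i) =
   bf d M v v + z * bf d M v w + cnj z * bf d M w v + (cnj z * z) * bf d M w w"
proof -
  have "\<And>i j. cnj (v i + z * w i) * M i j * (v j + z * w j) =
     cnj (v i) * M i j * v j + z * (cnj (v i) * M i j * w j) + cnj z * (cnj (w i) * M i j * v j) + (cnj z * z) * (cnj (w i) * M i j * w j)"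
    by (simp add: algebra_simps)
  then show ?thesis by (simp add: bf_def sum.distrib sum_distrib_left)
qed

lemma real_quad: fixes x c :: real assumes "\<And>t. 0 \<le> t * x + t^2 * c" shows "x = 0"
proof (rule ccontr)
  assume "x \<noteq> 0"
  define e where "e = abs c + 1"
  have e: "e > 0" "abs c = e - 1" unfolding e_def by auto
  define t where "t = - x / e"
  have h: "0 \<le> t * x + t^2 * c" by (rule assms)
  have "t^2 * c \<le> t^2 * abs c" by (simp add: mult_left_mono)
  moreover have "t * x + t^2 * (e - 1) = - (x^2 / e^2)" unfolding t_def using e
    by (simp add: field_simps power2_eq_square)
  moreover have "x^2 / e^2 > 0" using \<open>x\<noteq>0\<close> e by simp
  ultimately show False using h e by auto
qed

lemma psd_zero:
  assumes "psd d M" "qf d M v = 0"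
  shows "bf d M v w = 0 \<and> bf d M w v = 0"
proof -
  define A where "A = bf d M v w"
  define B where "B = bf d M w v"
  define C where "C = bf d M w w"
  have F: "Im (z * A + cnj z * B + (cnj z * z) * C) = 0 \<and> 0 \<le> Re (z * A + cnj z * B + (cnj z * z) * C)" for z
  proof -
    define u where "u = (\<lambda>i. v i + z * w i)"
    have "qf d M u = z * A + cnj z * B + (cnj z * z) * C"
      using assms(2) unfolding u_def by (simp add: qf_bf bf_expand A_def B_def C_def)
    moreover have "Im (qf d M u) = 0 \<and> 0 \<le> Re (qf d M u)"
      using assms(1) unfolding psd_def qf_def by blast
    ultimately show ?thesis by simp
  qed
  have 1: "Re A + Re B = 0"
  proof (rule real_quad[where c = "Re C"])
    fix t :: real
    from F[of "of_real t"] show "0 \<le> t * (Re A + Re B) + t^2 * Re C" by (simp add: power2_eq_square algebra_simps)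
  qed
  have 2: "Im A + Im B = 0"
  proof (rule real_quad[where c = "Im C"])
    fix t :: real
    from F[of "of_real t"] show "0 \<le> t * (Im A + Im B) + t^2 * Im C" by (simp add: power2_eq_square algebra_simps)
  qed
  have 3: "Im B - Im A = 0"
  proof (rule real_quad[where c = "Re C"])
    fix t :: real
    from F[of "\<i> * of_real t"] show "0 \<le> t * (Im B - Im A) + t^2 * Re C" by (simp add: power2_eq_square algebra_simps)
  qed
  have 4: "Re A - Re B = 0"
  proof (rule real_quad[where c = "Im C"])
    fix t :: real
    from F[of "\<i> * of_real t"] show "0 \<le> t * (Re A - Re B) + t^2 * Im C" by (simp add: power2_eq_square algebra_simps)
  qed
  have "A = 0" "B = 0" using 1 2 3 4 by (auto intro: complex_eqI)
  then show ?thesis by (simp add: A_def B_def)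
qed

lemma expect_prod: "expect_tensor dA dB Q R (prod_state a b) = qf dA Q a * qf dB R b"
proof -
  have "expect_tensor dA dB Q R (prod_state a b) =
     (\<Sum>i<dA. \<Sum>i'<dB. \<Sum>p<dA. \<Sum>p'<dB. (cnj (a i) * Q i p * a p) * (cnj (b i') * R i' p' * b p'))"
    unfolding expect_tensor_def prod_state_def by (simp add: algebra_simps)
  also have "\<dots> = (\<Sum>i<dA. \<Sum>p<dA. \<Sum>i'<dB. \<Sum>p'<dB. (cnj (a i) * Q i p * a p) * (cnj (b i') * R i' p' * b p'))"
    by (rule sum.cong[OF refl], rule sum.swap)
  also have "\<dots> = qf dA Q a * qf dB R b"
    unfolding qf_def by (simp only: sum_distrib_right) (simp only: sum_distrib_left)
  finally show ?thesis .
qed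

lemma bf_ket: assumes "i < d" shows "bf d M (ket i) v = (\<Sum>j<d. M i j * v j)"
proof -
  have "\<And>ia. (\<Sum>j<d. cnj (ket i ia) * M ia j * v j) = (if ia = i then (\<Sum>j<d. M i j * v j) else 0)"
    by (simp add: ket_def)
  then show ?thesis using assms by (simp add: bf_def)
qed


lemma sum_Q_id:
  assumes "is_identity d (\<lambda>i j. \<Sum>k\<in>K. M k i j)" "finite K"
  shows "(\<Sum>k\<in>K. bf d (M k) w v) = cinner d w v"
proof -
  have "(\<Sum>k\<in>K. bf d (M k) w v) = (\<Sum>i<d. \<Sum>j<d. cnj (w i) * (\<Sum>k\<in>K. M k i j) * v j)"
    unfolding bf_def by (simp add: sum_distrib_left sum_distrib_right sum.swap[of _ K])
  also have "\<dots> = (\<Sum>i<d. \<Sum>j<d. if j = i then cnj (w i) * v i else 0)"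
    using assms(1) unfolding is_identity_def by (intro sum.cong refl) auto
  also have "\<dots> = cinner d w v" unfolding cinner_def by simp
  finally show ?thesis .
qed

lemma F1:
  assumes fin: "finite S"
  and Rpsd: "\<forall>k\<in>S. psd dB (Rk k)" and Rid: "is_identity dB (\<lambda>i j. \<Sum>k\<in>S. Rk k i j)"
  and E: "\<forall>k\<in>S. \<forall>l\<in>S. k \<noteq> l \<longrightarrow> expect_tensor dA dB Qt (Rk k) (prod_state (a l) (b l)) = 0"
  and ll: "l\<in>S" "l'\<in>S" "l\<noteq>l'"
  and nz: "qf dA Qt (a l) \<noteq> 0" "qf dA Qt (a l') \<noteq> 0"
  shows "cinner dB (b l) (b l') = 0"
proof -
  have z: "qf dB (Rk k) (b x) = 0" if "k\<in>S" "x\<in>S" "k\<noteq>x" "qf dA Qt (a x) \<noteq> 0" for k x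
    using E[rule_format, OF that(1) that(2) that(3)] that(4) by (simp add: expect_prod)
  have "(\<Sum>k\<in>S. bf dB (Rk k) (b l) (b l')) = 0"
  proof (rule sum.neutral, rule ballI)
    fix k assume k: "k \<in> S"
    show "bf dB (Rk k) (b l) (b l') = 0"
    proof (cases "k = l")
      case True
      then have "k \<noteq> l'" using ll by auto
      then have "qf dB (Rk k) (b l') = 0" using z[OF k ll(2) _ nz(2)] by auto
      then show ?thesis using psd_zero Rpsd k by blast
    next
      case False
      then have "qf dB (Rk k) (b l) = 0" using z[OF k ll(1) _ nz(1)] by auto
      then show ?thesis using psd_zero Rpsd k by blast
    qed
  qed
  then show ?thesis using sum_Q_id[OF Rid fin] by simp
qed

lemma sees:
  assumes psdQ: "psd d Q" and fin: "finite C" and l0: "l0 \<in> C"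
  and nz: "qf d Q (a l0) \<noteq> 0"
  and kill: "\<forall>l\<in>C-{l0}. qf d Q (a l) = 0"
  and orth: "\<forall>l\<in>C-{l0}. cinner d (a l0) (a l) = 0"
  and span: "\<forall>r<d. \<exists>\<mu>. \<forall>p<d. ket r p = (\<Sum>l\<in>C. \<mu> l * a l p)"
  and x: "cinner d (a l0) x \<noteq> 0"
  shows "qf d Q x \<noteq> 0"
proof
  assume qx: "qf d Q x = 0"
  from span obtain \<mu> where \<mu>: "\<forall>r<d. \<forall>p<d. ket r p = (\<Sum>l\<in>C. \<mu> r l * a l p)"
    by metis
  define lam where "lam l = (\<Sum>r<d. x r * \<mu> r l)" for l
  have xrep: "x p = (\<Sum>l\<in>C. lam l * a l p)" if p: "p < d" for p
  proof -
    have "(\<Sum>r<d. x r * ket r p) = (\<Sum>r<d. if r = p then x r else 0)"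
      by (intro sum.cong) (auto simp: ket_def)
    then have "x p = (\<Sum>r<d. x r * ket r p)" using p by simp
    also have "\<dots> = (\<Sum>r<d. x r * (\<Sum>l\<in>C. \<mu> r l * a l p))" using \<mu> p by simp
    also have "\<dots> = (\<Sum>l\<in>C. lam l * a l p)"
      unfolding lam_def by (simp add: sum_distrib_left sum_distrib_right sum.swap[of _ C] mult.assoc)
    finally show ?thesis .
  qed
  have killv: "(\<Sum>j<d. Q i j * a l j) = 0" if "i < d" "l \<in> C-{l0}" for i l
    using psd_zero[OF psdQ, of "a l" "ket i"] kill that bf_ket[of i d Q "a l"] by auto
  have Qx: "(\<Sum>j<d. Q i j * x j) = lam l0 * (\<Sum>j<d. Q i j * a l0 j)" if i: "i < d" for i
  proof -
    have "(\<Sum>j<d. Q i j * x j) = (\<Sum>j<d. Q i j * (\<Sum>l\<in>C. lam l * a l j))"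
      using xrep by simp
    also have "\<dots> = (\<Sum>l\<in>C. lam l * (\<Sum>j<d. Q i j * a l j))"
      by (simp add: sum_distrib_left sum.swap[of _ C] mult.left_commute)
    also have "\<dots> = lam l0 * (\<Sum>j<d. Q i j * a l0 j)"
      using killv[OF i] fin l0 by (subst sum.remove[of C l0]) auto
    finally show ?thesis .
  qed
  have cx: "cinner d (a l0) x = lam l0 * cinner d (a l0) (a l0)"
  proof -
    have "cinner d (a l0) x = (\<Sum>p<d. cnj (a l0 p) * (\<Sum>l\<in>C. lam l * a l p))"
      unfolding cinner_def using xrep by simp
    also have "\<dots> = (\<Sum>l\<in>C. lam l * cinner d (a l0) (a l))"
      unfolding cinner_def by (simp add: sum_distrib_left sum.swap[of _ C] mult.left_commute)
    also have "\<dots> = lam l0 * cinner d (a l0) (a l0)"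
      using orth fin l0 by (subst sum.remove[of C l0]) auto
    finally show ?thesis .
  qed
  then have lnz: "lam l0 \<noteq> 0" using x by auto
  have "(\<Sum>j<d. Q i j * x j) = 0" if "i < d" for i
    using psd_zero[OF psdQ qx, of "ket i"] bf_ket[OF that, of Q x] by auto
  then have "(\<Sum>j<d. Q i j * a l0 j) = 0" if "i < d" for i
    using Qx[OF that] that lnz by auto
  then have "qf d Q (a l0) = 0"
    unfolding qf_def by (simp add: mult.assoc flip: sum_distrib_left)
  then show False using nz by simp
qed

lemma AliceE2:
  fixes a b :: "'i \<Rightarrow> nat \<Rightarrow> complex" and S :: "'i set"
  assumes "one_way_LOCC_Alice_first dA dB S (\<lambda>l. prod_state (a l) (b l))"
  obtains N :: nat and Q :: "nat \<Rightarrow> nat \<Rightarrow> nat \<Rightarrow> complex" and R :: "nat \<Rightarrow> 'i \<Rightarrow> nat \<Rightarrow> nat \<Rightarrow> complex"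
  where "\<forall>t<N. psd dA (Q t)"
    "is_identity dA (\<lambda>i j. \<Sum>t<N. Q t i j)"
    "\<forall>t<N. (\<forall>k\<in>S. psd dB (R t k)) \<and> is_identity dB (\<lambda>i j. \<Sum>k\<in>S. R t k i j)"
    "\<forall>t<N. \<forall>k\<in>S. \<forall>l\<in>S. k \<noteq> l \<longrightarrow> expect_tensor dA dB (Q t) (R t k) (prod_state (a l) (b l)) = 0"
  using assms unfolding one_way_LOCC_Alice_first_def
  apply (elim exE conjE)
  apply (rule that)
  apply assumption+
  done

lemma BobE2:
  fixes a b :: "'i \<Rightarrow> nat \<Rightarrow> complex" and S :: "'i set"
  assumes "one_way_LOCC_Bob_first dA dB S (\<lambda>l. prod_state (a l) (b l))"
  obtains N :: nat and Q :: "nat \<Rightarrow> nat \<Rightarrow> nat \<Rightarrow> complex" and R :: "nat \<Rightarrow> 'i \<Rightarrow> nat \<Rightarrow> nat \<Rightarrow> complex"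
  where "\<forall>t<N. psd dB (Q t)"
    "is_identity dB (\<lambda>i j. \<Sum>t<N. Q t i j)"
    "\<forall>t<N. (\<forall>k\<in>S. psd dA (R t k)) \<and> is_identity dA (\<lambda>i j. \<Sum>k\<in>S. R t k i j)"
    "\<forall>t<N. \<forall>k\<in>S. \<forall>l\<in>S. k \<noteq> l \<longrightarrow> expect_tensor dA dB (R t k) (Q t) (prod_state (a l) (b l)) = 0"
  using assms unfolding one_way_LOCC_Bob_first_def
  apply (elim exE conjE)
  apply (rule that)
  apply assumption+
  done

lemma core:
  fixes a b :: "'i \<Rightarrow> nat \<Rightarrow> complex" and S :: "'i set"
  assumes fin: "finite S" and CS: "C \<subseteq> S" and l0: "l0 \<in> C"
  and bnz: "\<forall>l\<in>C-{l0}. cinner dB (b l0) (b l) \<noteq> 0"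
  and orth: "\<forall>l\<in>C-{l0}. cinner dA (a l0) (a l) = 0"
  and span: "\<forall>r<dA. \<exists>\<mu>. \<forall>p<dA. ket r p = (\<Sum>l\<in>C. \<mu> l * a l p)"
  and nz: "cinner dA (a l0) (a l0) \<noteq> 0"
  and pq: "p\<in>S" "q\<in>S" "p\<noteq>q" "cinner dA (a l0) (a p) \<noteq> 0" "cinner dA (a l0) (a q) \<noteq> 0"
     "cinner dB (b p) (b q) \<noteq> 0"
  shows "\<not> one_way_LOCC_Alice_first dA dB S (\<lambda>l. prod_state (a l) (b l))"
proof
  assume "one_way_LOCC_Alice_first dA dB S (\<lambda>l. prod_state (a l) (b l))"
  then obtain N :: nat and Q :: "nat \<Rightarrow> nat \<Rightarrow> nat \<Rightarrow> complex" and R :: "nat \<Rightarrow> 'i \<Rightarrow> nat \<Rightarrow> nat \<Rightarrow> complex" where Qpsd: "\<forall>t<N. psd dA (Q t)"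
    and Qid: "is_identity dA (\<lambda>i j. \<Sum>t<N. Q t i j)"
    and RR: "\<forall>t<N. (\<forall>k\<in>S. psd dB (R t k)) \<and> is_identity dB (\<lambda>i j. \<Sum>k\<in>S. R t k i j)"
    and E: "\<forall>t<N. \<forall>k\<in>S. \<forall>l\<in>S. k \<noteq> l \<longrightarrow> expect_tensor dA dB (Q t) (R t k) (prod_state (a l) (b l)) = 0"
    by (rule AliceE2)
  have finC: "finite C" using fin CS finite_subset by auto
  have "(\<Sum>t<N. qf dA (Q t) (a l0)) = cinner dA (a l0) (a l0)"
    using sum_Q_id[OF Qid, of "a l0" "a l0"] by (simp add: qf_bf)
  then have "\<exists>t<N. qf dA (Q t) (a l0) \<noteq> 0"
  proof (rule contrapos_pp)
    assume "\<not> (\<exists>t<N. qf dA (Q t) (a l0) \<noteq> 0)"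
    then have "(\<Sum>t<N. qf dA (Q t) (a l0)) = 0" by (intro sum.neutral) auto
    then show "(\<Sum>t<N. qf dA (Q t) (a l0)) \<noteq> cinner dA (a l0) (a l0)" using nz by simp
  qed
  then obtain t where t: "t < N" "qf dA (Q t) (a l0) \<noteq> 0" by blast
  have R1: "\<forall>k\<in>S. psd dB (R t k)" and R2: "is_identity dB (\<lambda>i j. \<Sum>k\<in>S. R t k i j)"
    using RR t(1) by auto
  have E1: "\<forall>k\<in>S. \<forall>l\<in>S. k \<noteq> l \<longrightarrow> expect_tensor dA dB (Q t) (R t k) (prod_state (a l) (b l)) = 0"
    using E t(1) by blast
  note F = F1[OF fin R1 R2 E1]
  have kill: "\<forall>l\<in>C-{l0}. qf dA (Q t) (a l) = 0"
  proof (intro ballI, rule ccontr)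
    fix l assume l: "l \<in> C-{l0}" and ql: "qf dA (Q t) (a l) \<noteq> 0"
    have "l0 \<in> S" "l \<in> S" "l0 \<noteq> l" using l0 CS l by auto
    then have "cinner dB (b l0) (b l) = 0" using F t(2) ql by blast
    then show False using bnz l by auto
  qed
  have Qt: "psd dA (Q t)" using Qpsd t(1) by blast
  have sp: "qf dA (Q t) (a p) \<noteq> 0" by (rule sees[OF Qt finC l0 t(2) kill orth span pq(4)])
  have sq: "qf dA (Q t) (a q) \<noteq> 0" by (rule sees[OF Qt finC l0 t(2) kill orth span pq(5)])
  have "cinner dB (b p) (b q) = 0" by (rule F[OF pq(1) pq(2) pq(3) sp sq])
  then show False using pq by auto
qed

lemma bob_to_alice:
  fixes a b :: "'i \<Rightarrow> nat \<Rightarrow> complex" and S :: "'i set"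
  assumes "one_way_LOCC_Bob_first dA dB S (\<lambda>l. prod_state (a l) (b l))"
  shows "one_way_LOCC_Alice_first dB dA S (\<lambda>l. prod_state (b l) (a l))"
proof -
  obtain N :: nat and Q :: "nat \<Rightarrow> nat \<Rightarrow> nat \<Rightarrow> complex" and R :: "nat \<Rightarrow> 'i \<Rightarrow> nat \<Rightarrow> nat \<Rightarrow> complex" where
    A: "(\<forall>t<N. psd dB (Q t))" "is_identity dB (\<lambda>i j. \<Sum>t<N. Q t i j)"
    "(\<forall>t<N. (\<forall>k\<in>S. psd dA (R t k)) \<and> is_identity dA (\<lambda>i j. \<Sum>k\<in>S. R t k i j))"
    "(\<forall>t<N. \<forall>k\<in>S. \<forall>l\<in>S. k \<noteq> l \<longrightarrow> expect_tensor dA dB (R t k) (Q t) (prod_state (a l) (b l)) = 0)"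
    using assms by (rule BobE2)
  have eq: "expect_tensor dB dA (Q t) (R t k) (prod_state (b l) (a l)) = expect_tensor dA dB (R t k) (Q t) (prod_state (a l) (b l))" for t k l
    by (simp add: expect_prod mult.commute)
  show ?thesis unfolding one_way_LOCC_Alice_first_def
    apply (rule exI[where x=N], rule exI[where x=Q], rule exI[where x=R])
    unfolding eq using A by (intro conjI)
qed

lemma H_pointwise:
  assumes H: "ortho_graph dA S a = complement_graph S (ortho_graph dB S b)"
  and uw: "u\<in>S" "w\<in>S" "u\<noteq>w"
  shows "cinner dA (a u) (a w) \<noteq> 0 \<longleftrightarrow> cinner dB (b u) (b w) = 0"
proof -
  have sym: "cinner d (f x) (f y) = 0 \<longleftrightarrow> cinner d (f y) (f x) = 0" for d and f :: "'a \<Rightarrow> nat \<Rightarrow> complex" and x y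
  proof -
    have "cinner d (f y) (f x) = cnj (cinner d (f x) (f y))" unfolding cinner_def by (simp add: mult.commute)
    then show ?thesis by simp
  qed
  have og: "{u,w} \<in> ortho_graph d S f \<longleftrightarrow> cinner d (f u) (f w) \<noteq> 0" for d f
  proof
    assume "{u,w} \<in> ortho_graph d S f"
    then obtain u' w' where e: "{u,w} = {u',w'}" and c: "cinner d (f u') (f w') \<noteq> 0"
      unfolding ortho_graph_def by blast
    from e have "(u=u' \<and> w=w') \<or> (u=w' \<and> w=u')" by (simp add: doubleton_eq_iff)
    then show "cinner d (f u) (f w) \<noteq> 0"
    proof
      assume "u=u' \<and> w=w'" then show ?thesis using c by simp
    next
      assume "u=w' \<and> w=u'" then show ?thesis using c sym[of d f u' w'] by simp
    qed
  next
    assume "cinner d (f u) (f w) \<noteq> 0"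
    then show "{u,w} \<in> ortho_graph d S f" unfolding ortho_graph_def using uw by blast
  qed
  have cg: "{u,w} \<in> complement_graph S (ortho_graph dB S b) \<longleftrightarrow> {u,w} \<notin> ortho_graph dB S b"
    unfolding complement_graph_def using uw by blast
  have "cinner dA (a u) (a w) \<noteq> 0 \<longleftrightarrow> {u,w} \<in> ortho_graph dA S a" using og[of dA a] by simp
  also have "\<dots> \<longleftrightarrow> {u,w} \<notin> ortho_graph dB S b" using H cg by simp
  also have "\<dots> \<longleftrightarrow> cinner dB (b u) (b w) = 0" using og[of dB b] by simp
  finally show ?thesis .
qed




definition fvec :: "nat \<Rightarrow> nat \<Rightarrow> nat \<Rightarrow> complex \<Rightarrow> nat \<Rightarrow> nat \<Rightarrow> complex" where
  "fvec M b s g j = (\<lambda>p. \<Sum>k\<in>{1..s}. if p = (b + k) mod M then g ^ k * root_unity s ^ (j * k) else 0)"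

lemma modinj:
  fixes j j' s M b :: nat
  assumes "1 \<le> j" "j \<le> s" "1 \<le> j'" "j' \<le> s" "s \<le> M" "(b+j) mod M = (b+j') mod M"
  shows "j = j'"
proof -
  have "int (b+j) mod int M = int (b+j') mod int M" using assms(6) by (metis of_nat_mod)
  then have "int M dvd (int j - int j')" by (simp add: mod_eq_dvd_iff)
  moreover have "\<bar>int j - int j'\<bar> < int M" using assms by auto
  ultimately show ?thesis
  proof (cases "j = j'")
    case False
    assume dv: "int M dvd (int j - int j')" and lt: "\<bar>int j - int j'\<bar> < int M"
    have "int j - int j' \<noteq> 0" using False by simp
    then have "\<bar>int M\<bar> \<le> \<bar>int j - int j'\<bar>" using dvd_imp_le_int dv by blast
    then show ?thesis using lt by simp
  qed
qed

lemma root_nz: "root_unity s \<noteq> 0" unfolding root_unity_def by simp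

lemma root_pow: assumes "s \<ge> 1" shows "root_unity s ^ d = 1 \<longleftrightarrow> s dvd d"
proof -
  have "root_unity s ^ d = exp (of_nat d * (2 * of_real pi * \<i> / of_nat s))"
    unfolding root_unity_def by (rule exp_of_nat_mult[symmetric])
  also have "\<dots> = exp (2 * complex_of_real pi * \<i> * complex_of_nat d / complex_of_nat s)"
    by (simp add: algebra_simps)
  finally show ?thesis using complex_root_unity_eq_1[OF assms] by simp
qed

lemma rootsum: assumes "s \<ge> 1"
  shows "(\<Sum>j\<in>{1..s}. root_unity s ^ (j * d)) = (if s dvd d then of_nat s else 0)"
proof -
  define x where "x = root_unity s ^ d"
  have e: "root_unity s ^ (j * d) = x ^ j" for j unfolding x_def by (simp add: power_mult[symmetric] mult.commute)
  have "(\<Sum>j\<in>{1..s}. x ^ j) = (\<Sum>j<s. x ^ Suc j)"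
    using sum.atLeast1_atMost_eq[of "\<lambda>j. x ^ j" s] by simp
  also have "\<dots> = x * (\<Sum>j<s. x ^ j)" by (simp add: sum_distrib_left)
  finally have S: "(\<Sum>j\<in>{1..s}. x ^ j) = x * (\<Sum>j<s. x ^ j)" .
  show ?thesis
  proof (cases "s dvd d")
    case True
    then have "x = 1" unfolding x_def using root_pow[OF assms] by simp
    then show ?thesis using True e by simp
  next
    case False
    then have "x \<noteq> 1" unfolding x_def using root_pow[OF assms] by simp
    moreover have "x ^ s = 1" unfolding x_def
      by (metis power_mult[symmetric] mult.commute root_pow[OF assms] dvd_refl power_mult power_one)
    ultimately have "(\<Sum>j<s. x ^ j) = 0" by (simp add: geometric_sum)
    then show ?thesis using False e S by simp
  qed
qed

lemma fvec_at:
  assumes "1 \<le> k0" "k0 \<le> s" "s \<le> M"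
  shows "fvec M b s g j ((b + k0) mod M) = g ^ k0 * root_unity s ^ (j * k0)"
proof -
  have "fvec M b s g j ((b + k0) mod M) = (\<Sum>k\<in>{1..s}. if k = k0 then g ^ k * root_unity s ^ (j * k) else 0)"
  proof (unfold fvec_def, intro sum.cong refl)
    fix x assume x: "x \<in> {1..s}"
    have "(b + k0) mod M = (b + x) mod M \<longleftrightarrow> x = k0"
      using modinj[of k0 s x M b] assms x by auto
    then show "(if (b + k0) mod M = (b + x) mod M then g ^ x * root_unity s ^ (j * x) else 0) =
            (if x = k0 then g ^ x * root_unity s ^ (j * x) else 0)" by simp
  qed
  then show ?thesis using assms by simp
qed

lemma fvec_at_nz:
  assumes "1 \<le> k0" "k0 \<le> s" "s \<le> M" "g \<noteq> 0"
  shows "fvec M b s g j ((b + k0) mod M) \<noteq> 0"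
  using fvec_at[OF assms(1-3)] assms(4) root_nz by simp

lemma fi_step1:
  fixes c w1 w2 X y :: complex
  assumes "c * w1 = w2"
  shows "c / X * (if P then y * w1 else 0) = (if P then y / X * w2 else 0)"
proof (cases P)
  case True
  have "c / X * (y * w1) = y / X * (c * w1)" by (simp add: algebra_simps)
  then show ?thesis using True assms by simp
qed simp

lemma fi_step2:
  fixes y :: complex
  shows "(\<Sum>j\<in>J. if P then y * f j else 0) = (if P then y * (\<Sum>j\<in>J. f j) else 0)"
  by (cases P) (simp_all add: sum_distrib_left)

lemma pow_comb:
  assumes "k0 \<le> s"
  shows "root_unity s ^ (j * (s - k0)) * root_unity s ^ (j * k) = root_unity s ^ (j * (k + s - k0))"
proof -
  have "(s - k0) + k = k + s - k0" using assms by simp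
  then have "j * (s - k0) + j * k = j * (k + s - k0)" by (metis add_mult_distrib2)
  then show ?thesis by (simp only: power_add[symmetric])
qed

lemma fi_term:
  assumes "k0 \<le> s"
  shows "root_unity s ^ (j * (s - k0)) / X * fvec M b s g j p =
     (\<Sum>k\<in>{1..s}. if p = (b + k) mod M then g ^ k / X * root_unity s ^ (j * (k + s - k0)) else 0)"
proof -
  have "root_unity s ^ (j * (s - k0)) / X * fvec M b s g j p =
     (\<Sum>k\<in>{1..s}. root_unity s ^ (j * (s - k0)) / X * (if p = (b + k) mod M then g ^ k * root_unity s ^ (j * k) else 0))"
    unfolding fvec_def by (rule sum_distrib_left)
  also have "\<dots> = (\<Sum>k\<in>{1..s}. if p = (b + k) mod M then g ^ k / X * root_unity s ^ (j * (k + s - k0)) else 0)"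
    by (rule sum.cong[OF refl], rule fi_step1[OF pow_comb[OF assms]])
  finally show ?thesis .
qed

lemma fourier_inv:
  assumes k0: "1 \<le> k0" "k0 \<le> s" and sM: "s \<le> M" and g: "g \<noteq> 0"
  shows "(\<Sum>j\<in>{1..s}. (root_unity s ^ (j * (s - k0)) / (of_nat s * g ^ k0)) * fvec M b s g j p)
          = ket ((b + k0) mod M) p"
proof -
  have s1: "s \<ge> 1" using k0 by simp
  have "(\<Sum>j\<in>{1..s}. (root_unity s ^ (j * (s - k0)) / (of_nat s * g ^ k0)) * fvec M b s g j p)
     = (\<Sum>j\<in>{1..s}. \<Sum>k\<in>{1..s}. if p = (b + k) mod M then
          g ^ k / (of_nat s * g ^ k0) * root_unity s ^ (j * (k + s - k0)) else 0)"
    by (rule sum.cong[OF refl], rule fi_term[OF k0(2)])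
  also have "\<dots> = (\<Sum>k\<in>{1..s}. if p = (b + k) mod M then
          g ^ k / (of_nat s * g ^ k0) * (\<Sum>j\<in>{1..s}. root_unity s ^ (j * (k + s - k0))) else 0)"
    apply (subst sum.swap)
    apply (intro sum.cong refl)
    subgoal for k by (rule fi_step2)
    done
  also have "\<dots> = (\<Sum>k\<in>{1..s}. if k = k0 \<and> p = (b + k0) mod M then 1 else 0)"
  proof (intro sum.cong refl)
    fix k assume k: "k \<in> {1..s}"
    have dv: "s dvd (k + s - k0) \<longleftrightarrow> k = k0"
    proof
      assume d: "s dvd (k + s - k0)"
      have lo: "0 < k + s - k0" and hi: "k + s - k0 < 2 * s" using k k0 by auto
      from d obtain q where q: "k + s - k0 = s * q" by (auto elim: dvdE)
      have "q \<noteq> 0" using q lo by auto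
      moreover have "s * q < s * 2" using q hi by (simp add: mult.commute)
      then have "q < 2" by simp
      ultimately have "q = 1" by arith
      then have "k + s - k0 = s" using q by simp
      then show "k = k0" using k0 k by auto
    qed simp
    show "(if p = (b + k) mod M then
          g ^ k / (of_nat s * g ^ k0) * (\<Sum>j\<in>{1..s}. root_unity s ^ (j * (k + s - k0))) else 0)
        = (if k = k0 \<and> p = (b + k0) mod M then 1 else 0)"
      using rootsum[OF s1, of "k + s - k0"] dv g s1 by auto
  qed
  also have "\<dots> = ket ((b + k0) mod M) p"
    using k0 by (simp add: ket_def)
  finally show ?thesis .
qed




lemma cinner_ket_l: assumes "c < d" shows "cinner d (ket c) f = f c"
proof -
  have "(\<Sum>i<d. cnj (ket c i) * f i) = (\<Sum>i<d. if i = c then f i else 0)"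
    by (intro sum.cong) (auto simp: ket_def)
  then show ?thesis using assms by (simp add: cinner_def)
qed

lemma cinner_ket_r: assumes "c < d" shows "cinner d f (ket c) = cnj (f c)"
proof -
  have "(\<Sum>i<d. cnj (f i) * ket c i) = (\<Sum>i<d. if i = c then cnj (f i) else 0)"
    by (intro sum.cong) (auto simp: ket_def)
  then show ?thesis using assms by (simp add: cinner_def)
qed

lemma cinner_self_nz: assumes "i0 < d" "v i0 \<noteq> 0" shows "cinner d v v \<noteq> 0"
proof -
  have e: "cinner d v v = of_real (\<Sum>i<d. (cmod (v i))^2)"
    unfolding cinner_def of_real_sum by (intro sum.cong refl) (metis complex_norm_square mult.commute)
  have "(\<Sum>i<d. (cmod (v i))^2) > 0"
    by (rule sum_pos2[of "{..<d}" i0]) (use assms in auto)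
  then have "complex_of_real (\<Sum>i<d. (cmod (v i))^2) \<noteq> 0" by (metis less_irrefl of_real_eq_0_iff)
  then show ?thesis using e by metis
qed

lemma span_fourier:
  fixes a :: "'i \<Rightarrow> nat \<Rightarrow> complex"
  assumes inj: "inj_on g {1..s}" and sub: "g ` {1..s} \<subseteq> C" and fin: "finite C"
    and av: "\<forall>j\<in>{1..s}. a (g j) = fvec M b s \<gamma> j" and k0: "1 \<le> k0" "k0 \<le> s" and sM: "s \<le> M"
    and \<gamma>: "\<gamma> \<noteq> 0"
  shows "\<exists>\<mu>. \<forall>p. ket ((b + k0) mod M) p = (\<Sum>l\<in>C. \<mu> l * a l p)"
proof -
  define co where "co j = root_unity s ^ (j * (s - k0)) / (of_nat s * \<gamma> ^ k0)" for j
  define \<mu> where "\<mu> l = (if l \<in> g ` {1..s} then co (inv_into {1..s} g l) else 0)" for l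
  show ?thesis
  proof (intro exI allI)
    fix p
    have "(\<Sum>l\<in>C. \<mu> l * a l p) = (\<Sum>l\<in>g ` {1..s}. \<mu> l * a l p)"
      by (rule sum.mono_neutral_right[OF fin sub]) (auto simp: \<mu>_def)
    also have "\<dots> = (\<Sum>j\<in>{1..s}. \<mu> (g j) * a (g j) p)"
      using sum.reindex[OF inj, of "\<lambda>l. \<mu> l * a l p"] by (simp add: comp_def)
    also have "\<dots> = (\<Sum>j\<in>{1..s}. co j * fvec M b s \<gamma> j p)"
    proof (rule sum.cong[OF refl])
      fix j assume j: "j \<in> {1..s}"
      have "g j \<in> g ` {1..s}" "inv_into {1..s} g (g j) = j" using j inv_into_f_f[OF inj j] by auto
      then show "\<mu> (g j) * a (g j) p = co j * fvec M b s \<gamma> j p" using av j by (simp add: \<mu>_def)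
    qed
    also have "\<dots> = ket ((b + k0) mod M) p" unfolding co_def by (rule fourier_inv[OF k0 sM \<gamma>])
    finally show "ket ((b + k0) mod M) p = (\<Sum>l\<in>C. \<mu> l * a l p)" by simp
  qed
qed

lemma valid_sq_board:
  assumes "valid_domino m n d" "sq \<in> dom_squares m n d" shows "sq \<in> board m n"
  using assms by (cases d) (auto simp: board_def)

lemma dom_of_eq:
  assumes dd: "domino_diagram m n D" and d: "d \<in> D" and sq: "sq \<in> dom_squares m n d"
  shows "dom_of m n D sq = d"
proof -
  have "valid_domino m n d" using dd d unfolding domino_diagram_def by blast
  then have "sq \<in> board m n" using valid_sq_board sq by blast
  then have "\<exists>!d. d \<in> D \<and> sq \<in> dom_squares m n d" using dd unfolding domino_diagram_def by blast
  then show ?thesis unfolding dom_of_def using d sq by (simp add: the1_equality)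
qed

lemma dom_of_in:
  assumes dd: "domino_diagram m n D" and sq: "sq \<in> board m n"
  shows "dom_of m n D sq \<in> D \<and> sq \<in> dom_squares m n (dom_of m n D sq)"
proof -
  have "\<exists>!d. d \<in> D \<and> sq \<in> dom_squares m n d" using dd sq unfolding domino_diagram_def by blast
  then show ?thesis unfolding dom_of_def by (rule theI')
qed

lemma pos_Ver:
  assumes "1 \<le> j" "j \<le> s" "s \<le> m"
  shows "dom_pos m n (Ver c b s) ((b + j) mod m, c') = j"
  unfolding dom_pos.simps fst_conv
proof (rule the_equality)
  show "1 \<le> j \<and> j \<le> s \<and> (b + j) mod m = (b + j) mod m" using assms by simp
next
  fix ja assume "1 \<le> ja \<and> ja \<le> s \<and> (b + ja) mod m = (b + j) mod m"
  then show "ja = j" using modinj[of ja s j m b] assms by auto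
qed

lemma pos_Hor:
  assumes "1 \<le> j" "j \<le> s" "s \<le> n"
  shows "dom_pos m n (Hor r b s) (r', (b + j) mod n) = j"
  unfolding dom_pos.simps snd_conv
proof (rule the_equality)
  show "1 \<le> j \<and> j \<le> s \<and> (b + j) mod n = (b + j) mod n" using assms by simp
next
  fix ja assume "1 \<le> ja \<and> ja \<le> s \<and> (b + ja) mod n = (b + j) mod n"
  then show "ja = j" using modinj[of ja s j n b] assms by auto
qed

lemma at_Ver:
  assumes dd: "domino_diagram m n D" and d: "Ver c b s \<in> D" and j: "1 \<le> j" "j \<le> s"
  shows "alice_vec m n D \<alpha> \<beta> ((b + j) mod m, c) = fvec m b s (\<beta> c) j
       \<and> bob_vec m n D \<alpha> \<beta> ((b + j) mod m, c) = ket c"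
proof -
  have v: "s \<le> m" using dd d unfolding domino_diagram_def by fastforce
  have "((b + j) mod m, c) \<in> dom_squares m n (Ver c b s)" using j by auto
  then have e: "dom_of m n D ((b + j) mod m, c) = Ver c b s" by (rule dom_of_eq[OF dd d])
  have p: "dom_pos m n (Ver c b s) ((b + j) mod m, c) = j" by (rule pos_Ver[OF j v])
  show ?thesis unfolding alice_vec_def bob_vec_def Let_def e p by (simp add: fvec_def)
qed

lemma at_Hor:
  assumes dd: "domino_diagram m n D" and d: "Hor r b s \<in> D" and j: "1 \<le> j" "j \<le> s"
  shows "alice_vec m n D \<alpha> \<beta> (r, (b + j) mod n) = ket r
       \<and> bob_vec m n D \<alpha> \<beta> (r, (b + j) mod n) = fvec n b s (\<alpha> r) j"
proof -
  have v: "s \<le> n" using dd d unfolding domino_diagram_def by fastforce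
  have "(r, (b + j) mod n) \<in> dom_squares m n (Hor r b s)" using j by auto
  then have e: "dom_of m n D (r, (b + j) mod n) = Hor r b s" by (rule dom_of_eq[OF dd d])
  have p: "dom_pos m n (Hor r b s) (r, (b + j) mod n) = j" by (rule pos_Hor[OF j v])
  show ?thesis unfolding alice_vec_def bob_vec_def Let_def e p by (simp add: fvec_def)
qed

lemma classify:
  assumes dd: "domino_diagram m n D" and sq: "(r, c) \<in> board m n"
  shows "(\<exists>b s j. Ver c b s \<in> D \<and> 1 \<le> j \<and> j \<le> s \<and> s \<le> m \<and> r = (b + j) mod m)
       \<or> (\<exists>b s j. Hor r b s \<in> D \<and> 1 \<le> j \<and> j \<le> s \<and> s \<le> n \<and> c = (b + j) mod n)"
proof -
  define d where "d = dom_of m n D (r, c)"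
  have d: "d \<in> D" "(r, c) \<in> dom_squares m n d" using dom_of_in[OF dd sq] d_def by auto
  have v: "valid_domino m n d" using dd d(1) unfolding domino_diagram_def by blast
  show ?thesis
  proof (cases d)
    case (Hor r' b s)
    from d(2) obtain j where "r = r'" "1 \<le> j" "j \<le> s" "c = (b + j) mod n" using Hor by auto
    moreover have "s \<le> n" using v Hor by auto
    ultimately show ?thesis using d(1) Hor by (intro disjI2) blast
  next
    case (Ver c' b s)
    from d(2) obtain j where "c = c'" "1 \<le> j" "j \<le> s" "r = (b + j) mod m" using Ver by auto
    moreover have "s \<le> m" using v Ver by auto
    ultimately show ?thesis using d(1) Ver by (intro disjI1) blast
  qed
qed




lemma own_lemma:
  assumes dd: "domino_diagram m n D" and sq: "(r, c) \<in> board m n"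
    and \<alpha>: "\<forall>r<m. \<alpha> r \<noteq> 0" and \<beta>: "\<forall>c<n. \<beta> c \<noteq> 0"
  shows "bob_vec m n D \<alpha> \<beta> (r,c) c \<noteq> 0 \<and> alice_vec m n D \<alpha> \<beta> (r,c) r \<noteq> 0
     \<and> (bob_vec m n D \<alpha> \<beta> (r,c) = ket c \<or> alice_vec m n D \<alpha> \<beta> (r,c) = ket r)"
proof -
  have rc: "r < m" "c < n" using sq by (auto simp: board_def)
  from classify[OF dd sq] show ?thesis
  proof
    assume "\<exists>b s j. Ver c b s \<in> D \<and> 1 \<le> j \<and> j \<le> s \<and> s \<le> m \<and> r = (b + j) mod m"
    then obtain b s j where h: "Ver c b s \<in> D" "1 \<le> j" "j \<le> s" "s \<le> m" "r = (b + j) mod m" by blast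
    have e: "alice_vec m n D \<alpha> \<beta> (r, c) = fvec m b s (\<beta> c) j" "bob_vec m n D \<alpha> \<beta> (r, c) = ket c"
      using at_Ver[OF dd h(1) h(2) h(3), of \<alpha> \<beta>] h(5) by auto
    have "fvec m b s (\<beta> c) j ((b + j) mod m) \<noteq> 0" using fvec_at_nz[OF h(2) h(3) h(4)] \<beta> rc by auto
    then show ?thesis using e h(5) by (simp add: ket_def)
  next
    assume "\<exists>b s j. Hor r b s \<in> D \<and> 1 \<le> j \<and> j \<le> s \<and> s \<le> n \<and> c = (b + j) mod n"
    then obtain b s j where h: "Hor r b s \<in> D" "1 \<le> j" "j \<le> s" "s \<le> n" "c = (b + j) mod n" by blast
    have e: "alice_vec m n D \<alpha> \<beta> (r, c) = ket r" "bob_vec m n D \<alpha> \<beta> (r, c) = fvec n b s (\<alpha> r) j"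
      using at_Hor[OF dd h(1) h(2) h(3), of \<alpha> \<beta>] h(5) by auto
    have "fvec n b s (\<alpha> r) j ((b + j) mod n) \<noteq> 0" using fvec_at_nz[OF h(2) h(3) h(4)] \<alpha> rc by auto
    then show ?thesis using e h(5) by (simp add: ket_def)
  qed
qed

lemma delta_span:
  fixes f :: "'i \<Rightarrow> complex"
  assumes "finite C" "x \<in> C"
  shows "(\<Sum>l\<in>C. (if l = x then 1 else 0) * f l) = f x"
proof -
  have "(\<Sum>l\<in>C. (if l = x then 1 else 0) * f l) = (\<Sum>l\<in>C. if l = x then f l else 0)"
    by (intro sum.cong) auto
  then show ?thesis using assms by simp
qed

lemma part1:
  assumes m2: "m \<ge> 2" and n2: "n \<ge> 2" and dd: "domino_diagram m n D"
    and \<alpha>: "\<forall>r<m. \<alpha> r \<noteq> 0" and \<beta>: "\<forall>c<n. \<beta> c \<noteq> 0"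
    and H: "\<forall>u\<in>board m n. \<forall>w\<in>board m n. u \<noteq> w \<longrightarrow>
      (cinner m (alice_vec m n D \<alpha> \<beta> u) (alice_vec m n D \<alpha> \<beta> w) \<noteq> 0 \<longleftrightarrow>
       cinner n (bob_vec m n D \<alpha> \<beta> u) (bob_vec m n D \<alpha> \<beta> w) = 0)"
    and Vd: "Ver c b s \<in> D" and s2: "s \<ge> 2"
  shows "\<not> one_way_LOCC_Alice_first m n (board m n)
           (\<lambda>sq. prod_state (alice_vec m n D \<alpha> \<beta> sq) (bob_vec m n D \<alpha> \<beta> sq))"
proof -
  define A where "A = alice_vec m n D \<alpha> \<beta>"
  define B where "B = bob_vec m n D \<alpha> \<beta>"
  have H': "\<And>u w. u \<in> board m n \<Longrightarrow> w \<in> board m n \<Longrightarrow> u \<noteq> w \<Longrightarrow>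
      (cinner m (A u) (A w) \<noteq> 0 \<longleftrightarrow> cinner n (B u) (B w) = 0)"
    using H unfolding A_def B_def by blast
  have v: "c < n" "b < m" "s \<le> m" using dd Vd unfolding domino_diagram_def by fastforce+
  define l0 where "l0 = ((b + 1) mod m, c)"
  define C where "C = {..<m} \<times> {c}"
  have A0: "A l0 = fvec m b s (\<beta> c) 1" and B0: "B l0 = ket c"
    using at_Ver[OF dd Vd, of 1 \<alpha> \<beta>] s2 unfolding A_def B_def l0_def by auto
  have bc: "\<beta> c \<noteq> 0" using \<beta> v by auto
  have fin: "finite (board m n)" unfolding board_def by simp
  have CS: "C \<subseteq> board m n" unfolding C_def board_def using v by auto
  have l0C: "l0 \<in> C" unfolding l0_def C_def using m2 by auto
  have l0b: "l0 \<in> board m n" using l0C CS by auto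
  have own: "\<And>r c'. (r,c') \<in> board m n \<Longrightarrow> B (r,c') c' \<noteq> 0 \<and> A (r,c') r \<noteq> 0 \<and> (B (r,c') = ket c' \<or> A (r,c') = ket r)"
    unfolding A_def B_def using own_lemma[OF dd _ \<alpha> \<beta>] by blast
  have bnz: "\<forall>l\<in>C-{l0}. cinner n (B l0) (B l) \<noteq> 0"
  proof
    fix l assume l: "l \<in> C - {l0}"
    then obtain r where r: "l = (r, c)" "r < m" unfolding C_def by auto
    have "(r,c) \<in> board m n" using r v by (simp add: board_def)
    then show "cinner n (B l0) (B l) \<noteq> 0" using own[of r c] r B0 cinner_ket_l[OF v(1)] by simp
  qed
  have orth: "\<forall>l\<in>C-{l0}. cinner m (A l0) (A l) = 0"
  proof
    fix l assume l: "l \<in> C - {l0}"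
    then have "l \<in> board m n" "l \<noteq> l0" using CS by auto
    then show "cinner m (A l0) (A l) = 0" using H'[OF l0b] bnz l by blast
  qed
  have span: "\<forall>r<m. \<exists>\<mu>. \<forall>p<m. ket r p = (\<Sum>l\<in>C. \<mu> l * A l p)"
  proof (intro allI impI)
    fix r assume r: "r < m"
    have rb: "(r,c) \<in> board m n" using r v by (simp add: board_def)
    from classify[OF dd rb] show "\<exists>\<mu>. \<forall>p<m. ket r p = (\<Sum>l\<in>C. \<mu> l * A l p)"
    proof
      assume "\<exists>b' s' j. Ver c b' s' \<in> D \<and> 1 \<le> j \<and> j \<le> s' \<and> s' \<le> m \<and> r = (b' + j) mod m"
      then obtain b' s' k0 where h: "Ver c b' s' \<in> D" "1 \<le> k0" "k0 \<le> s'" "s' \<le> m" "r = (b' + k0) mod m" by blast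
      have "\<exists>\<mu>. \<forall>p. ket ((b' + k0) mod m) p = (\<Sum>l\<in>C. \<mu> l * A l p)"
      proof (rule span_fourier[where g = "\<lambda>j. ((b' + j) mod m, c)"])
        show "inj_on (\<lambda>j. ((b' + j) mod m, c)) {1..s'}" unfolding inj_on_def using modinj[of _ s' _ m b'] h by auto
        show "(\<lambda>j. ((b' + j) mod m, c)) ` {1..s'} \<subseteq> C" unfolding C_def using m2 by auto
        show "finite C" unfolding C_def by simp
        show "\<forall>j\<in>{1..s'}. A ((b' + j) mod m, c) = fvec m b' s' (\<beta> c) j" using at_Ver[OF dd h(1)] unfolding A_def by auto
      qed (use h bc in auto)
      then show ?thesis using h(5) by auto
    next
      assume "\<exists>b' s' j. Hor r b' s' \<in> D \<and> 1 \<le> j \<and> j \<le> s' \<and> s' \<le> n \<and> c = (b' + j) mod n"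
      then obtain b' s' j where h: "Hor r b' s' \<in> D" "1 \<le> j" "j \<le> s'" "c = (b' + j) mod n" by blast
      have Ar: "A (r,c) = ket r" using at_Hor[OF dd h(1) h(2) h(3)] h(4) unfolding A_def by auto
      have "(r,c) \<in> C" unfolding C_def using r by auto
      have fC: "finite C" unfolding C_def by simp
      have "\<forall>p<m. ket r p = (\<Sum>l\<in>C. (if l = (r,c) then 1 else 0) * A l p)"
      proof (intro allI impI)
        fix p assume "p < m"
        show "ket r p = (\<Sum>l\<in>C. (if l = (r,c) then 1 else 0) * A l p)"
          using delta_span[OF fC \<open>(r,c) \<in> C\<close>, of "\<lambda>l. A l p"] Ar by simp
      qed
      then show ?thesis by - (rule exI[where x="\<lambda>l. if l = (r,c) then (1::complex) else 0"], assumption)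
    qed
  qed
  have r1: "(b + 1) mod m < m" using m2 by simp
  have v1r1: "A l0 ((b + 1) mod m) \<noteq> 0" using A0 fvec_at_nz[of 1 s m "\<beta> c" b 1] s2 v bc by simp
  have v1r2: "A l0 ((b + 2) mod m) \<noteq> 0" using A0 fvec_at_nz[of 2 s m "\<beta> c" b 1] s2 v bc by simp
  have nz: "cinner m (A l0) (A l0) \<noteq> 0" by (rule cinner_self_nz[where v="A l0", OF r1 v1r1])
  define c' where "c' = (c + 1) mod n"
  have c'n: "c' < n" unfolding c'_def using n2 by simp
  have cc: "c' \<noteq> c"
  proof
    assume "c' = c"
    show False
    proof (cases "c + 1 < n")
      case True then show False using \<open>c' = c\<close> unfolding c'_def by simp
    next
      case False
      then have e: "c + 1 = n" using v(1) by simp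
      then have "c' = 0" unfolding c'_def by simp
      then show False using \<open>c' = c\<close> e n2 by simp
    qed
  qed
  define r1 where "r1 = (b + 1) mod m"
  define r2 where "r2 = (b + 2) mod m"
  have r12: "r1 \<noteq> r2" unfolding r1_def r2_def using modinj[of 1 s 2 m b] s2 v by auto
  define p where "p = (r1, c')"
  define q where "q = (r2, c')"
  have pb: "p \<in> board m n" and qb: "q \<in> board m n" unfolding p_def q_def r1_def r2_def board_def
    using c'n m2 by auto
  have pq: "p \<noteq> q" unfolding p_def q_def using r12 by auto
  have l0p: "l0 \<noteq> p" and l0q: "l0 \<noteq> q" unfolding l0_def p_def q_def using cc by auto
  have ket0: "cinner n (B l0) (ket c') = 0" using B0 cinner_ket_r[OF c'n] cc by (simp add: ket_def)
  have v1p: "cinner m (A l0) (A p) \<noteq> 0"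
  proof (cases "B p = ket c'")
    case True
    then show ?thesis using H'[OF l0b pb l0p] ket0 by simp
  next
    case False
    then have "A p = ket r1" using own[OF pb[unfolded p_def]] unfolding p_def by auto
    then show ?thesis using cinner_ket_r[of r1 m "A l0"] v1r1 r1 unfolding r1_def by simp
  qed
  have v1q: "cinner m (A l0) (A q) \<noteq> 0"
  proof (cases "B q = ket c'")
    case True
    then show ?thesis using H'[OF l0b qb l0q] ket0 by simp
  next
    case False
    then have "A q = ket r2" using own[OF qb[unfolded q_def]] unfolding q_def by auto
    moreover have "r2 < m" unfolding r2_def using m2 by simp
    ultimately show ?thesis using cinner_ket_r[of r2 m "A l0"] v1r2 unfolding r2_def by simp
  qed
  have ownp: "B p c' \<noteq> 0 \<and> (B p = ket c' \<or> A p = ket r1)" using own[OF pb[unfolded p_def]] unfolding p_def by auto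
  have ownq: "B q c' \<noteq> 0 \<and> (B q = ket c' \<or> A q = ket r2)" using own[OF qb[unfolded q_def]] unfolding q_def by auto
  have bpq: "cinner n (B p) (B q) \<noteq> 0"
  proof (cases "B p = ket c'")
    case True
    then show ?thesis using cinner_ket_l[OF c'n] ownq by simp
  next
    case F1: False
    show ?thesis
    proof (cases "B q = ket c'")
      case True
      then show ?thesis using cinner_ket_r[OF c'n] ownp by simp
    next
      case False
      then have "A p = ket r1" "A q = ket r2" using F1 ownp ownq by auto
      moreover have "r1 < m" unfolding r1_def using m2 by simp
      ultimately have "cinner m (A p) (A q) = 0" using cinner_ket_l[of r1 m] r12 by (simp add: ket_def)
      then show ?thesis using H'[OF pb qb pq] by simp
    qed
  qed
  have "\<not> one_way_LOCC_Alice_first m n (board m n) (\<lambda>l. prod_state (A l) (B l))"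
    by (rule core[OF fin CS l0C bnz orth span nz pb qb pq v1p v1q bpq])
  then show ?thesis unfolding A_def B_def .
qed

lemma part2:
  assumes m2: "m \<ge> 2" and n2: "n \<ge> 2" and dd: "domino_diagram m n D"
    and \<alpha>: "\<forall>r<m. \<alpha> r \<noteq> 0" and \<beta>: "\<forall>c<n. \<beta> c \<noteq> 0"
    and H: "\<forall>u\<in>board m n. \<forall>w\<in>board m n. u \<noteq> w \<longrightarrow>
      (cinner m (alice_vec m n D \<alpha> \<beta> u) (alice_vec m n D \<alpha> \<beta> w) \<noteq> 0 \<longleftrightarrow>
       cinner n (bob_vec m n D \<alpha> \<beta> u) (bob_vec m n D \<alpha> \<beta> w) = 0)"
    and Hd: "Hor r b s \<in> D" and s2: "s \<ge> 2"
  shows "\<not> one_way_LOCC_Bob_first m n (board m n)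
           (\<lambda>sq. prod_state (alice_vec m n D \<alpha> \<beta> sq) (bob_vec m n D \<alpha> \<beta> sq))"
proof -
  define A where "A = alice_vec m n D \<alpha> \<beta>"
  define B where "B = bob_vec m n D \<alpha> \<beta>"
  have H': "\<And>u w. u \<in> board m n \<Longrightarrow> w \<in> board m n \<Longrightarrow> u \<noteq> w \<Longrightarrow>
      (cinner n (B u) (B w) \<noteq> 0 \<longleftrightarrow> cinner m (A u) (A w) = 0)"
    using H unfolding A_def B_def by blast
  have v: "r < m" "b < n" "s \<le> n" using dd Hd unfolding domino_diagram_def by fastforce+
  define l0 where "l0 = (r, (b + 1) mod n)"
  define C where "C = {r} \<times> {..<n}"
  have A0: "A l0 = ket r" and B0: "B l0 = fvec n b s (\<alpha> r) 1"
    using at_Hor[OF dd Hd, of 1 \<alpha> \<beta>] s2 unfolding A_def B_def l0_def by auto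
  have ar: "\<alpha> r \<noteq> 0" using \<alpha> v by auto
  have fin: "finite (board m n)" unfolding board_def by simp
  have CS: "C \<subseteq> board m n" unfolding C_def board_def using v by auto
  have l0C: "l0 \<in> C" unfolding l0_def C_def using n2 by auto
  have l0b: "l0 \<in> board m n" using l0C CS by auto
  have own: "\<And>r' c'. (r',c') \<in> board m n \<Longrightarrow> B (r',c') c' \<noteq> 0 \<and> A (r',c') r' \<noteq> 0 \<and> (B (r',c') = ket c' \<or> A (r',c') = ket r')"
    unfolding A_def B_def using own_lemma[OF dd _ \<alpha> \<beta>] by blast
  have bnz: "\<forall>l\<in>C-{l0}. cinner m (A l0) (A l) \<noteq> 0"
  proof
    fix l assume l: "l \<in> C - {l0}"
    then obtain c where c: "l = (r, c)" "c < n" unfolding C_def by auto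
    have "(r,c) \<in> board m n" using c v by (simp add: board_def)
    then show "cinner m (A l0) (A l) \<noteq> 0" using own[of r c] c A0 cinner_ket_l[OF v(1)] by simp
  qed
  have orth: "\<forall>l\<in>C-{l0}. cinner n (B l0) (B l) = 0"
  proof
    fix l assume l: "l \<in> C - {l0}"
    then have "l \<in> board m n" "l \<noteq> l0" using CS by auto
    then show "cinner n (B l0) (B l) = 0" using H'[OF l0b] bnz l by blast
  qed
  have span: "\<forall>c<n. \<exists>\<mu>. \<forall>p<n. ket c p = (\<Sum>l\<in>C. \<mu> l * B l p)"
  proof (intro allI impI)
    fix c assume c: "c < n"
    have rb: "(r,c) \<in> board m n" using c v by (simp add: board_def)
    from classify[OF dd rb] show "\<exists>\<mu>. \<forall>p<n. ket c p = (\<Sum>l\<in>C. \<mu> l * B l p)"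
    proof
      assume "\<exists>b' s' j. Hor r b' s' \<in> D \<and> 1 \<le> j \<and> j \<le> s' \<and> s' \<le> n \<and> c = (b' + j) mod n"
      then obtain b' s' k0 where h: "Hor r b' s' \<in> D" "1 \<le> k0" "k0 \<le> s'" "s' \<le> n" "c = (b' + k0) mod n" by blast
      have "\<exists>\<mu>. \<forall>p. ket ((b' + k0) mod n) p = (\<Sum>l\<in>C. \<mu> l * B l p)"
      proof (rule span_fourier[where g = "\<lambda>j. (r, (b' + j) mod n)"])
        show "inj_on (\<lambda>j. (r, (b' + j) mod n)) {1..s'}" unfolding inj_on_def using modinj[of _ s' _ n b'] h by auto
        show "(\<lambda>j. (r, (b' + j) mod n)) ` {1..s'} \<subseteq> C" unfolding C_def using n2 by auto
        show "finite C" unfolding C_def by simp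
        show "\<forall>j\<in>{1..s'}. B (r, (b' + j) mod n) = fvec n b' s' (\<alpha> r) j" using at_Hor[OF dd h(1)] unfolding B_def by auto
      qed (use h ar in auto)
      then show ?thesis using h(5) by auto
    next
      assume "\<exists>b' s' j. Ver c b' s' \<in> D \<and> 1 \<le> j \<and> j \<le> s' \<and> s' \<le> m \<and> r = (b' + j) mod m"
      then obtain b' s' j where h: "Ver c b' s' \<in> D" "1 \<le> j" "j \<le> s'" "r = (b' + j) mod m" by blast
      have Br: "B (r,c) = ket c" using at_Ver[OF dd h(1) h(2) h(3)] h(4) unfolding B_def by auto
      have "(r,c) \<in> C" unfolding C_def using c by auto
      have fC: "finite C" unfolding C_def by simp
      have "\<forall>p<n. ket c p = (\<Sum>l\<in>C. (if l = (r,c) then 1 else 0) * B l p)"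
      proof (intro allI impI)
        fix p assume "p < n"
        show "ket c p = (\<Sum>l\<in>C. (if l = (r,c) then 1 else 0) * B l p)"
          using delta_span[OF fC \<open>(r,c) \<in> C\<close>, of "\<lambda>l. B l p"] Br by simp
      qed
      then show ?thesis by - (rule exI[where x="\<lambda>l. if l = (r,c) then (1::complex) else 0"], assumption)
    qed
  qed
  have c1: "(b + 1) mod n < n" using n2 by simp
  have v1c1: "B l0 ((b + 1) mod n) \<noteq> 0" using B0 fvec_at_nz[of 1 s n "\<alpha> r" b 1] s2 v ar by simp
  have v1c2: "B l0 ((b + 2) mod n) \<noteq> 0" using B0 fvec_at_nz[of 2 s n "\<alpha> r" b 1] s2 v ar by simp
  have nz: "cinner n (B l0) (B l0) \<noteq> 0" by (rule cinner_self_nz[where v="B l0", OF c1 v1c1])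
  define r' where "r' = (r + 1) mod m"
  have r'm: "r' < m" unfolding r'_def using m2 by simp
  have rr: "r' \<noteq> r"
  proof
    assume "r' = r"
    show False
    proof (cases "r + 1 < m")
      case True then show False using \<open>r' = r\<close> unfolding r'_def by simp
    next
      case False
      then have e: "r + 1 = m" using v(1) by simp
      then have "r' = 0" unfolding r'_def by simp
      then show False using \<open>r' = r\<close> e m2 by simp
    qed
  qed
  define c1 where "c1 = (b + 1) mod n"
  define c2 where "c2 = (b + 2) mod n"
  have c12: "c1 \<noteq> c2" unfolding c1_def c2_def using modinj[of 1 s 2 n b] s2 v by auto
  define p where "p = (r', c1)"
  define q where "q = (r', c2)"
  have pb: "p \<in> board m n" and qb: "q \<in> board m n" unfolding p_def q_def c1_def c2_def board_def
    using r'm n2 by auto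
  have pq: "p \<noteq> q" unfolding p_def q_def using c12 by auto
  have l0p: "l0 \<noteq> p" and l0q: "l0 \<noteq> q" unfolding l0_def p_def q_def using rr by auto
  have ket0: "cinner m (A l0) (ket r') = 0" using A0 cinner_ket_r[OF r'm] rr by (simp add: ket_def)
  have v1p: "cinner n (B l0) (B p) \<noteq> 0"
  proof (cases "A p = ket r'")
    case True
    then show ?thesis using H'[OF l0b pb l0p] ket0 by simp
  next
    case False
    then have "B p = ket c1" using own[OF pb[unfolded p_def]] unfolding p_def by auto
    then show ?thesis using cinner_ket_r[of c1 n "B l0"] v1c1 c1 unfolding c1_def by simp
  qed
  have v1q: "cinner n (B l0) (B q) \<noteq> 0"
  proof (cases "A q = ket r'")
    case True
    then show ?thesis using H'[OF l0b qb l0q] ket0 by simp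
  next
    case False
    then have "B q = ket c2" using own[OF qb[unfolded q_def]] unfolding q_def by auto
    moreover have "c2 < n" unfolding c2_def using n2 by simp
    ultimately show ?thesis using cinner_ket_r[of c2 n "B l0"] v1c2 unfolding c2_def by simp
  qed
  have ownp: "A p r' \<noteq> 0 \<and> (B p = ket c1 \<or> A p = ket r')" using own[OF pb[unfolded p_def]] unfolding p_def by auto
  have ownq: "A q r' \<noteq> 0 \<and> (B q = ket c2 \<or> A q = ket r')" using own[OF qb[unfolded q_def]] unfolding q_def by auto
  have apq: "cinner m (A p) (A q) \<noteq> 0"
  proof (cases "A p = ket r'")
    case True
    then show ?thesis using cinner_ket_l[OF r'm] ownq by simp
  next
    case F1: False
    show ?thesis
    proof (cases "A q = ket r'")
      case True
      then show ?thesis using cinner_ket_r[OF r'm] ownp by simp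
    next
      case False
      then have "B p = ket c1" "B q = ket c2" using F1 ownp ownq by auto
      moreover have "c1 < n" unfolding c1_def using n2 by simp
      ultimately have "cinner n (B p) (B q) = 0" using cinner_ket_l[of c1 n] c12 by (simp add: ket_def)
      then show ?thesis using H'[OF pb qb pq] by simp
    qed
  qed
  have "\<not> one_way_LOCC_Alice_first n m (board m n) (\<lambda>l. prod_state (B l) (A l))"
    by (rule core[OF fin CS l0C bnz orth span nz pb qb pq v1p v1q apq])
  then have "\<not> one_way_LOCC_Bob_first m n (board m n) (\<lambda>l. prod_state (A l) (B l))"
    using bob_to_alice by blast
  then show ?thesis unfolding A_def B_def .
qed

theorem mainTheorem8:
  fixes m n :: nat and D :: "domino set" and \<alpha> \<beta> :: "nat \<Rightarrow> complex"
  assumes "m \<ge> 2" and "n \<ge> 2"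
    and "domino_diagram m n D"
    and "\<forall>r<m. \<alpha> r \<noteq> 0" and "\<forall>c<n. \<beta> c \<noteq> 0"
    and "ortho_graph m (board m n) (alice_vec m n D \<alpha> \<beta>)
           = complement_graph (board m n) (ortho_graph n (board m n) (bob_vec m n D \<alpha> \<beta>))"
  shows "((\<exists>d\<in>D. is_vertical d \<and> dom_len d \<ge> 2) \<longrightarrow>
            \<not> one_way_LOCC_Alice_first m n (board m n)
                 (\<lambda>sq. prod_state (alice_vec m n D \<alpha> \<beta> sq) (bob_vec m n D \<alpha> \<beta> sq)))
       \<and> ((\<exists>d\<in>D. is_horizontal d \<and> dom_len d \<ge> 2) \<longrightarrow>
            \<not> one_way_LOCC_Bob_first m n (board m n)
                 (\<lambda>sq. prod_state (alice_vec m n D \<alpha> \<beta> sq) (bob_vec m n D \<alpha> \<beta> sq)))"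
proof -
  have H: "\<forall>u\<in>board m n. \<forall>w\<in>board m n. u \<noteq> w \<longrightarrow>
      (cinner m (alice_vec m n D \<alpha> \<beta> u) (alice_vec m n D \<alpha> \<beta> w) \<noteq> 0 \<longleftrightarrow>
       cinner n (bob_vec m n D \<alpha> \<beta> u) (bob_vec m n D \<alpha> \<beta> w) = 0)"
    using H_pointwise[OF assms(6)] by blast
  show ?thesis
  proof (intro conjI impI)
    assume "\<exists>d\<in>D. is_vertical d \<and> dom_len d \<ge> 2"
    then obtain d where d: "d \<in> D" "is_vertical d" "dom_len d \<ge> 2" by blast
    then obtain c b s where "d = Ver c b s" by (cases d) auto
    then show "\<not> one_way_LOCC_Alice_first m n (board m n)
                 (\<lambda>sq. prod_state (alice_vec m n D \<alpha> \<beta> sq) (bob_vec m n D \<alpha> \<beta> sq))"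
      using part1[OF assms(1-5) H, of c b s] d by simp
  next
    assume "\<exists>d\<in>D. is_horizontal d \<and> dom_len d \<ge> 2"
    then obtain d where d: "d \<in> D" "is_horizontal d" "dom_len d \<ge> 2" by blast
    then obtain r b s where "d = Hor r b s" by (cases d) auto
    then show "\<not> one_way_LOCC_Bob_first m n (board m n)
                 (\<lambda>sq. prod_state (alice_vec m n D \<alpha> \<beta> sq) (bob_vec m n D \<alpha> \<beta> sq))"
      using part2[OF assms(1-5) H, of r b s] d by simp
  qed
qed


end
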